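(* Let $N\geq3$. The trajectory $l_\infty$, i.e. the unique trajectory of system (S2) belonging to the unstable manifold of $Q_1=(0,0,0)$ and contained in the plane $\{x=0\}$ (with $z>0$), enters the region $\mathcal{R}=\{y>0,\ z>x\}$ and remains in it forever.
   Context: Let $m>1$, $\sigma>0$, $p>m$. System (S2) is $$\dot x=x(2-(m-1)y),\quad \dot y=-x-(N-2)y+z-my^2-\tfrac{p-m}{\sigma+2}xy,\quad \dot z=z(\sigma+2+(p-m)y).$$ For $N\ge3$, $Q_1=(0,0,0)$ is a saddle with two-dimensional unstable manifold tangent to the span of $(N,-1,0)$ and $(0,1,N+\sigma)$; the plane $\{x=0\}$ is invariant. *)

theory Defs
  imports Complex_Main "HOL-Library.Extended_Real"
begin

definition S2_sol :: "real \<Rightarrow> real \<Rightarrow> real \<Rightarrow> nat \<Rightarrow>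
    (real \<Rightarrow> real) \<Rightarrow> (real \<Rightarrow> real) \<Rightarrow> (real \<Rightarrow> real) \<Rightarrow> real set \<Rightarrow> bool" where
  "S2_sol m \<sigma> p N x y z I \<longleftrightarrow>
     (\<forall>t\<in>I.
        (x has_real_derivative x t * (2 - (m - 1) * y t)) (at t) \<and>
        (y has_real_derivative
            - x t - (real N - 2) * y t + z t - m * (y t)\<^sup>2 - (p - m) / (\<sigma> + 2) * x t * y t) (at t) \<and>
        (z has_real_derivative z t * (\<sigma> + 2 + (p - m) * y t)) (at t))"

definition S2_forward_maximal :: "real \<Rightarrow> real \<Rightarrow> real \<Rightarrow> nat \<Rightarrow>
    (real \<Rightarrow> real) \<Rightarrow> (real \<Rightarrow> real) \<Rightarrow> (real \<Rightarrow> real) \<Rightarrow> ereal \<Rightarrow> bool" where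
  "S2_forward_maximal m \<sigma> p N x y z b \<longleftrightarrow>
     S2_sol m \<sigma> p N x y z {t. ereal t < b} \<and>
     \<not> (\<exists>b' > b. \<exists>x' y' z'. S2_sol m \<sigma> p N x' y' z' {t. ereal t < b'} \<and>
           (\<forall>t. ereal t < b \<longrightarrow> x' t = x t \<and> y' t = y t \<and> z' t = z t))"

end

theory Submission
  imports Defs "HOL-Analysis.Analysis"
begin

theorem lemma3p2:
  fixes m \<sigma> p :: real and N :: nat
    and x y z :: "real \<Rightarrow> real" and b :: ereal
  assumes "m > 1" and "\<sigma> > 0" and "p > m" and "N \<ge> 3"
    and sol: "S2_forward_maximal m \<sigma> p N x y z b"
    and unstable: "((\<lambda>t. (x t, y t, z t)) \<longlongrightarrow> (0, 0, 0)) at_bot"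
    and plane: "\<forall>t. ereal t < b \<longrightarrow> x t = 0"
    and zpos: "\<forall>t. ereal t < b \<longrightarrow> z t > 0"
  shows "\<exists>t0. ereal t0 < b \<and> (\<forall>t. t0 \<le> t \<and> ereal t < b \<longrightarrow> y t > 0 \<and> z t > x t)"
proof -
  have solS: "S2_sol m \<sigma> p N x y z {t. ereal t < b}"
    using sol unfolding S2_forward_maximal_def by blast
  have bnot: "b \<noteq> -\<infinity>"
  proof
    assume bm: "b = -\<infinity>"
    have "S2_sol m \<sigma> p N (\<lambda>_. 0) (\<lambda>_. 0) (\<lambda>_. 0) {t. ereal t < \<infinity>}"
      unfolding S2_sol_def by (simp add: power2_eq_square)
    moreover have "\<infinity> > b" using bm by simp
    moreover have "\<forall>t. ereal t < b \<longrightarrow> (0::real) = x t \<and> (0::real) = y t \<and> (0::real) = z t"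
      using bm by simp
    ultimately show False using sol unfolding S2_forward_maximal_def by blast
  qed
  obtain T0 where T0: "ereal T0 < b"
  proof (cases b)
    case (real r) then show ?thesis using that[of "r-1"] by simp
  next
    case PInf then show ?thesis using that[of 0] by simp
  next
    case MInf then show ?thesis using bnot by simp
  qed
  have der: "\<And>t. ereal t < b \<Longrightarrow> (y has_real_derivative (- (real N - 2) * y t + z t - m * (y t)\<^sup>2)) (at t)"
  proof -
    fix t assume "ereal t < b"
    with solS plane have "(y has_real_derivative
            - x t - (real N - 2) * y t + z t - m * (y t)\<^sup>2 - (p - m) / (\<sigma> + 2) * x t * y t) (at t)"
      and "x t = 0"
      unfolding S2_sol_def by auto
    moreover have "- x t - (real N - 2) * y t + z t - m * (y t)\<^sup>2 - (p - m) / (\<sigma> + 2) * x t * y t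
       = - (real N - 2) * y t + z t - m * (y t)\<^sup>2" using \<open>x t = 0\<close> by (simp add: algebra_simps)
    ultimately show "(y has_real_derivative (- (real N - 2) * y t + z t - m * (y t)\<^sup>2)) (at t)" by (metis (no_types, lifting))
  qed
  have ylim: "(y \<longlongrightarrow> 0) at_bot"
    using tendsto_fst[OF tendsto_snd[OF unstable]] by simp
  have Npos: "real N - 2 > 0" using assms(4) by simp
  have "eventually (\<lambda>t. dist (y t) 0 < (real N - 2) / m) at_bot"
    using tendstoD[OF ylim] Npos assms(1) by simp
  then obtain T1 where T1: "\<And>t. t \<le> T1 \<Longrightarrow> \<bar>y t\<bar> < (real N - 2) / m"
    unfolding eventually_at_bot_linorder by auto
  define T where "T = min T0 T1"
  have Tb: "ereal T < b" using T0 unfolding T_def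
    by (meson ereal_less_eq(3) le_less_trans min.cobounded1)
  have "\<exists>t0. t0 \<le> T \<and> y t0 > 0"
  proof (rule ccontr)
    assume "\<not> ?thesis"
    hence neg: "\<And>t. t \<le> T \<Longrightarrow> y t \<le> 0" by force
    have "\<And>t. t \<le> T \<Longrightarrow> \<exists>d. DERIV y t :> d \<and> d > 0"
    proof -
      fix t assume tT: "t \<le> T"
      have tb: "ereal t < b" using Tb tT by (meson ereal_less_eq(3) le_less_trans)
      have a: "\<bar>y t\<bar> < (real N - 2) / m" using T1 tT unfolding T_def by simp
      have "m * \<bar>y t\<bar> < real N - 2" using a assms(1) by (simp add: field_simps)
      hence "(real N - 2) + m * y t > 0" using neg[OF tT] by simp
      hence "(- y t) * ((real N - 2) + m * y t) \<ge> 0" using neg[OF tT] by (simp add: mult_nonpos_nonneg)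
      moreover have "z t > 0" using zpos tb by blast
      ultimately have "- (real N - 2) * y t + z t - m * (y t)\<^sup>2 > 0"
        by (simp add: algebra_simps power2_eq_square)
      thus "\<exists>d. DERIV y t :> d \<and> d > 0" using der[OF tb] by blast
    qed
    from DERIV_pos_imp_increasing_at_bot[of T y, OF this ylim]
    have "0 < y T" by simp
    with neg[of T] show False by simp
  qed
  then obtain t0 where t0: "t0 \<le> T" "y t0 > 0" by blast
  have t0b: "ereal t0 < b" using Tb t0 by (meson ereal_less_eq(3) le_less_trans)
  have cont: "\<And>t. ereal t < b \<Longrightarrow> isCont y t"
    using der by (meson DERIV_isCont)
  have pos: "y t > 0" if "t0 \<le> t" "ereal t < b" for t
  proof (rule ccontr)
    assume "\<not> y t > 0"
    define S where "S = {u. t0 \<le> u \<and> u \<le> t \<and> y u \<le> 0}"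
    have tS: "t \<in> S" using that \<open>\<not> y t > 0\<close> unfolding S_def by simp
    have Sb: "bdd_below S" unfolding S_def by (auto intro: bdd_belowI[of _ t0])
    define s where "s = Inf S"
    have sb: "\<And>u. u \<in> S \<Longrightarrow> s \<le> u" unfolding s_def using Sb by (simp add: cInf_lower)
    have s_ge: "t0 \<le> s" unfolding s_def using tS by (intro cInf_greatest) (auto simp: S_def)
    have s_le: "s \<le> t" using sb tS by simp
    have sb': "ereal s < b" using that s_le by (meson ereal_less_eq(3) le_less_trans)
    have closedS: "closed S"
    proof -
      have "S = y -` {..0} \<inter> {t0..t}" unfolding S_def by auto
      moreover have "continuous_on {t0..t} y"
        using cont that by (meson atLeastAtMost_iff continuous_at_imp_continuous_on
              ereal_less_eq(3) le_less_trans)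
      ultimately show ?thesis
        using closed_vimage_Int[of "{..0}" "{t0..t}" y] by simp
    qed
    have sS: "s \<in> S" unfolding s_def using closedS tS Sb by (metis closed_contains_Inf empty_iff)
    hence ys: "y s \<le> 0" unfolding S_def by simp
    have "s \<noteq> t0" using ys t0 by auto
    hence st0: "t0 < s" using s_ge by simp
    have below: "\<And>u. t0 \<le> u \<Longrightarrow> u < s \<Longrightarrow> y u > 0"
    proof -
      fix u assume "t0 \<le> u" "u < s"
      hence "u \<notin> S" using sb by force
      thus "y u > 0" using \<open>t0 \<le> u\<close> \<open>u < s\<close> s_le unfolding S_def by auto
    qed
    have dpos: "- (real N - 2) * y s + z s - m * (y s)\<^sup>2 > 0"
    proof -
      have "y s \<ge> 0"
      proof (rule ccontr)
        assume "\<not> y s \<ge> 0"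
        hence "y s < 0" by simp
        from cont[OF sb'] have "(y \<longlongrightarrow> y s) (at_left s)"
          by (simp add: isCont_def filterlim_at_split)
        moreover have "eventually (\<lambda>u. y u > 0) (at_left s)"
          unfolding eventually_at_left[OF st0] using below st0 by (intro exI[of _ t0]) auto
        ultimately have "y s \<ge> 0"
          by (intro tendsto_lowerbound) (auto elim: eventually_mono)
        thus False using \<open>y s < 0\<close> by simp
      qed
      hence "y s = 0" using ys by simp
      thus ?thesis using zpos sb' by simp
    qed
    from DERIV_pos_inc_left[OF der[OF sb'] dpos]
    obtain d where d: "d > 0" "\<And>h. h > 0 \<Longrightarrow> h < d \<Longrightarrow> y (s - h) < y s" by blast
    define h where "h = min (d/2) ((s - t0)/2)"
    have h: "h > 0" "h < d" using d st0 unfolding h_def by auto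
    have "h \<le> (s - t0)/2" unfolding h_def by linarith
    hence "t0 \<le> s - h" using st0 by simp
    hence "y (s - h) > 0" using below[of "s - h"] h by simp
    moreover have "y (s - h) < y s" using d(2) h by simp
    ultimately show False using ys by simp
  qed
  show ?thesis
    using t0b pos plane zpos by (intro exI[of _ t0]) auto
qed

end
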